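(* Let $M$ be a finite-dimensional left $\mathsf{VBr}_{r,t}(\omega)$-module with decomposition $M=\bigoplus_{\mathbf a,\mathbf i}1_{\mathbf a}M_{\mathbf i}$. Let $\mathbf a\in\mathrm{Seq}_{r,t}$, $k\in\{1,\dots,r+t-1\}$ with $\mathsf s_k\mathbf a\neq\mathbf a$, and $\mathbf i\in\mathbb C^{r+t}$; let $I=\{\mathbf i'\in\mathbb C^{r+t}:\mathrm i'_j=\mathrm i_j\text{ for }j\ne k,k+1,\ \mathrm i'_k+\mathrm i'_{k+1}=0\}$. Then $\hat s_k1_{\mathbf a}M_{\mathbf i}\subseteq1_{\mathsf s_k\mathbf a}M_{\mathsf s_k\mathbf i}$ if $\mathrm i_k+\mathrm i_{k+1}\neq0$, and $\hat s_k1_{\mathbf a}M_{\mathbf i}\subseteq\bigoplus_{\mathbf i'\in I}1_{\mathsf s_k\mathbf a}M_{\mathbf i'}$ if $\mathrm i_k+\mathrm i_{k+1}=0$.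
   Context: $\mathrm{Seq}_{r,t}$: sequences $\mathbf a\in\{\wedge,\vee\}^{r+t}$ with exactly $r$ entries $\wedge$; $J=\{1,\dots,r+t-1\}$; $\mathsf s_k$ swaps entries $k,k+1$ (of sequences and of vectors in $\mathbb C^{r+t}$). $\mathrm{Br}_{r,t}(\gamma)$: basis oriented Brauer diagrams $\mathbf a\to\mathbf b$ (perfect matchings between bottom row labelled $\mathbf a$ and top row labelled $\mathbf b$; bottom-to-top strands join equal labels, strands within a row join different labels), product by stacking (second factor below), $0$ if labels mismatch, loops replaced by $\gamma$. $1_{\mathbf a}$ identity; for $k\in J$: if $a_k=a_{k+1}$, $s_k1_{\mathbf a}$ crosses strands $k,k+1$ ($\mathbf a\to\mathbf a$); if $a_k\neq a_{k+1}$, $\hat s_k1_{\mathbf a}$ crossing $\mathbf a\to\mathsf s_k\mathbf a$, $e_k1_{\mathbf a}$ cap at bottom $k,k+1$ and cup at top $k,k+1$ ($\mathbf a\to\mathbf a$), $\hat e_k1_{\mathbf a}$ same shape $\mathbf a\to\mathsf s_k\mathbf a$; these are $0$ when the condition fails; $s_k=\sum_{\mathbf a}s_k1_{\mathbf a}$ etc. For $\omega=(\omega_j)_{j\ge0}\subset\mathbb C$, $\mathsf{VBr}_{r,t}(\omega)$ is the quotient of the free product $\mathrm{Br}_{r,t}(\omega_0)*\mathbb C[y_1,\dots,y_{r+t}]$ by: $y_i$ commutes with all $1_{\mathbf a}$, and with $s_k,\hat s_k,e_k,\hat e_k$ when $i\notin\{k,k+1\}$; $e_1y_1^je_11_{\mathbf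 a}=\omega_je_11_{\mathbf a}$ for $j\ge0$ and $(a_1,a_2)=(\wedge,\vee)$; for $a_k=a_{k+1}$: $s_ky_k1_{\mathbf a}-y_{k+1}s_k1_{\mathbf a}=-1_{\mathbf a}$, $s_ky_{k+1}1_{\mathbf a}-y_ks_k1_{\mathbf a}=1_{\mathbf a}$; $\hat s_ky_k-y_{k+1}\hat s_k=\hat e_k$, $\hat s_ky_{k+1}-y_k\hat s_k=-\hat e_k$; $e_k,\hat e_k$ are annihilated on both sides by $y_k+y_{k+1}$. $1_{\mathbf a}M_{\mathbf i}=\{v\in1_{\mathbf a}M:(y_k-\mathrm i_k)^Nv=0\ \forall k,\ N\gg0\}$. *)

theory Defs
  imports "HOL-Analysis.Analysis"
begin

text \<open>A sequence a in Seq r t is a bool list of length r+t; True stands for the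
 label up-arrow (wedge), False for down-arrow (vee). Positions are 1-based:
 entry j of a is lab a j = a ! (j - 1).\<close>

definition lab :: "bool list \<Rightarrow> nat \<Rightarrow> bool" where
  "lab a j = a ! (j - 1)"

definition Seq :: "nat \<Rightarrow> nat \<Rightarrow> bool list set" where
  "Seq r t = {a. length a = r + t \<and> card {j \<in> {1..r+t}. lab a j} = r}"

definition sseq :: "nat \<Rightarrow> bool list \<Rightarrow> bool list" where
  "sseq k a = a[k - 1 := a ! k, k := a ! (k - 1)]"

text \<open>sk k swaps entries k and k+1 of a vector in C^(r+t), vectors being
 functions on the index set {1..r+t} (values elsewhere are irrelevant).\<close>
definition svec :: "nat \<Rightarrow> (nat \<Rightarrow> complex) \<Rightarrow> nat \<Rightarrow> complex" where
  "svec k i = i(k := i (Suc k), Suc k := i k)"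

datatype pt = Bot nat | Top nat

definition pts :: "nat \<Rightarrow> pt set" where
  "pts n = Bot ` {1..n} \<union> Top ` {1..n}"

text \<open>A diagram is a triple (a, b, p): bottom labels a, top labels b and a
 perfect matching p of the points, given as a fixpoint-free involution on
 pts n (identity outside).\<close>
type_synonym diag = "bool list \<times> bool list \<times> (pt \<Rightarrow> pt)"

definition is_diag :: "nat \<Rightarrow> nat \<Rightarrow> diag \<Rightarrow> bool" where
  "is_diag r t D = (case D of (a, b, p) \<Rightarrow>
     a \<in> Seq r t \<and> b \<in> Seq r t \<and>
     (\<forall>x \<in> pts (r+t). p x \<in> pts (r+t) \<and> p x \<noteq> x \<and> p (p x) = x) \<and>
     (\<forall>x. x \<notin> pts (r+t) \<longrightarrow> p x = x) \<and>
     (\<forall>j l. p (Bot j) = Top l \<and> Bot j \<in> pts (r+t) \<longrightarrow> lab a j = lab b l) \<and>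
     (\<forall>j l. p (Bot j) = Bot l \<and> Bot j \<in> pts (r+t) \<longrightarrow> lab a j \<noteq> lab a l) \<and>
     (\<forall>j l. p (Top j) = Top l \<and> Top j \<in> pts (r+t) \<longrightarrow> lab b j \<noteq> lab b l))"

text \<open>Stacking: points of three levels, L0 = bottom of the lower diagram,
 L1 = middle, L2 = top of the upper diagram.\<close>
datatype lv = L0 nat | L1 nat | L2 nat

definition lowmap :: "pt \<Rightarrow> lv" where
  "lowmap x = (case x of Bot j \<Rightarrow> L0 j | Top j \<Rightarrow> L1 j)"
definition upmap :: "pt \<Rightarrow> lv" where
  "upmap x = (case x of Bot j \<Rightarrow> L1 j | Top j \<Rightarrow> L2 j)"

definition stack_edges :: "nat \<Rightarrow> (pt \<Rightarrow> pt) \<Rightarrow> (pt \<Rightarrow> pt) \<Rightarrow> (lv \<times> lv) set" where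
  "stack_edges n p1 p2 =
     {(lowmap x, lowmap (p2 x)) | x. x \<in> pts n} \<union> {(upmap x, upmap (p1 x)) | x. x \<in> pts n}"

definition conn :: "nat \<Rightarrow> (pt \<Rightarrow> pt) \<Rightarrow> (pt \<Rightarrow> pt) \<Rightarrow> (lv \<times> lv) set" where
  "conn n p1 p2 = (stack_edges n p1 p2 \<union> (stack_edges n p1 p2)\<inverse>)\<^sup>*"

definition outer :: "lv \<Rightarrow> pt" where
  "outer x = (case x of L0 j \<Rightarrow> Bot j | L1 j \<Rightarrow> Bot 0 | L2 j \<Rightarrow> Top j)"

definition is_mid :: "lv \<Rightarrow> bool" where
  "is_mid x = (case x of L1 _ \<Rightarrow> True | _ \<Rightarrow> False)"

text \<open>Matching of the product: an outer point is joined to the unique other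
 outer point in its connected component.\<close>
definition comp_match :: "nat \<Rightarrow> (pt \<Rightarrow> pt) \<Rightarrow> (pt \<Rightarrow> pt) \<Rightarrow> pt \<Rightarrow> pt" where
  "comp_match n p1 p2 x =
     (if x \<in> pts n then
        (let u = (case x of Bot j \<Rightarrow> L0 j | Top j \<Rightarrow> L2 j) in
         outer (THE v. v \<noteq> u \<and> \<not> is_mid v \<and> (u, v) \<in> conn n p1 p2))
      else x)"

definition loops :: "nat \<Rightarrow> (pt \<Rightarrow> pt) \<Rightarrow> (pt \<Rightarrow> pt) \<Rightarrow> nat" where
  "loops n p1 p2 = card ((\<lambda>x. conn n p1 p2 `` {x}) `
      {L1 j | j. j \<in> {1..n} \<and> (\<forall>w \<in> conn n p1 p2 `` {L1 j}. is_mid w)})"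

text \<open>Product D1 D2 (D2 stacked below D1), in the case the labels match.\<close>
definition dcomp :: "nat \<Rightarrow> diag \<Rightarrow> diag \<Rightarrow> diag" where
  "dcomp n D1 D2 = (case D1 of (b', c, p1) \<Rightarrow> case D2 of (a, b, p2) \<Rightarrow>
      (a, c, comp_match n p1 p2))"

definition dloops :: "nat \<Rightarrow> diag \<Rightarrow> diag \<Rightarrow> nat" where
  "dloops n D1 D2 = (case D1 of (b', c, p1) \<Rightarrow> case D2 of (a, b, p2) \<Rightarrow> loops n p1 p2)"

definition vert :: "nat \<Rightarrow> pt \<Rightarrow> pt" where
  "vert n x = (if x \<in> pts n then (case x of Bot j \<Rightarrow> Top j | Top j \<Rightarrow> Bot j) else x)"

definition cross_m :: "nat \<Rightarrow> nat \<Rightarrow> pt \<Rightarrow> pt" where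
  "cross_m n k = (vert n)(Bot k := Top (Suc k), Bot (Suc k) := Top k,
                          Top k := Bot (Suc k), Top (Suc k) := Bot k)"

definition cap_m :: "nat \<Rightarrow> nat \<Rightarrow> pt \<Rightarrow> pt" where
  "cap_m n k = (vert n)(Bot k := Bot (Suc k), Bot (Suc k) := Bot k,
                        Top k := Top (Suc k), Top (Suc k) := Top k)"

definition one_d :: "nat \<Rightarrow> bool list \<Rightarrow> diag" where
  "one_d n a = (a, a, vert n)"
definition s_d :: "nat \<Rightarrow> nat \<Rightarrow> bool list \<Rightarrow> diag" where
  "s_d n k a = (a, a, cross_m n k)"
definition sh_d :: "nat \<Rightarrow> nat \<Rightarrow> bool list \<Rightarrow> diag" where
  "sh_d n k a = (a, sseq k a, cross_m n k)"
definition e_d :: "nat \<Rightarrow> nat \<Rightarrow> bool list \<Rightarrow> diag" where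
  "e_d n k a = (a, a, cap_m n k)"
definition eh_d :: "nat \<Rightarrow> nat \<Rightarrow> bool list \<Rightarrow> diag" where
  "eh_d n k a = (a, sseq k a, cap_m n k)"

text \<open>Complex vector spaces are given as an additive group 'v with a scalar
 multiplication sc satisfying the vector space axioms.\<close>
abbreviation clin :: "(complex \<Rightarrow> 'v::ab_group_add \<Rightarrow> 'v) \<Rightarrow> ('v \<Rightarrow> 'v) \<Rightarrow> bool" where
  "clin sc f \<equiv> Vector_Spaces.linear sc sc f"

text \<open>rho gives the action of the basis diagrams of Br_{r,t}(gamma) on V;
 extended linearly this is a unital algebra homomorphism.\<close>
definition Br_module :: "(complex \<Rightarrow> 'v::ab_group_add \<Rightarrow> 'v) \<Rightarrow> nat \<Rightarrow> nat \<Rightarrow> complex \<Rightarrow> (diag \<Rightarrow> 'v::ab_group_add \<Rightarrow> 'v) \<Rightarrow> bool" where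
  "Br_module sc r t \<gamma> \<rho> =
    ((\<forall>D. is_diag r t D \<longrightarrow> clin sc (\<rho> D)) \<and>
     (\<forall>v. (\<Sum>a \<in> Seq r t. \<rho> (one_d (r+t) a) v) = v) \<and>
     (\<forall>D1 D2. is_diag r t D1 \<longrightarrow> is_diag r t D2 \<longrightarrow>
        \<rho> D1 \<circ> \<rho> D2 =
          (if fst D1 = fst (snd D2)
           then (\<lambda>v. sc (\<gamma> ^ dloops (r+t) D1 D2) (\<rho> (dcomp (r+t) D1 D2) v))
           else (\<lambda>v. 0))))"

text \<open>The elements s_k, hat s_k, e_k, hat e_k (sums over all a of the
 diagrams s_k 1_a etc., which are zero when the condition fails).\<close>
definition opS :: "nat \<Rightarrow> nat \<Rightarrow> (diag \<Rightarrow> 'v::ab_group_add \<Rightarrow> 'v) \<Rightarrow> nat \<Rightarrow> 'v \<Rightarrow> 'v" where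
  "opS r t \<rho> k v = (\<Sum>a \<in> {a \<in> Seq r t. lab a k = lab a (Suc k)}. \<rho> (s_d (r+t) k a) v)"
definition opSh :: "nat \<Rightarrow> nat \<Rightarrow> (diag \<Rightarrow> 'v::ab_group_add \<Rightarrow> 'v) \<Rightarrow> nat \<Rightarrow> 'v \<Rightarrow> 'v" where
  "opSh r t \<rho> k v = (\<Sum>a \<in> {a \<in> Seq r t. lab a k \<noteq> lab a (Suc k)}. \<rho> (sh_d (r+t) k a) v)"
definition opE :: "nat \<Rightarrow> nat \<Rightarrow> (diag \<Rightarrow> 'v::ab_group_add \<Rightarrow> 'v) \<Rightarrow> nat \<Rightarrow> 'v \<Rightarrow> 'v" where
  "opE r t \<rho> k v = (\<Sum>a \<in> {a \<in> Seq r t. lab a k \<noteq> lab a (Suc k)}. \<rho> (e_d (r+t) k a) v)"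
definition opEh :: "nat \<Rightarrow> nat \<Rightarrow> (diag \<Rightarrow> 'v::ab_group_add \<Rightarrow> 'v) \<Rightarrow> nat \<Rightarrow> 'v \<Rightarrow> 'v" where
  "opEh r t \<rho> k v = (\<Sum>a \<in> {a \<in> Seq r t. lab a k \<noteq> lab a (Suc k)}. \<rho> (eh_d (r+t) k a) v)"

text \<open>A left VBr_{r,t}(omega)-module structure on V: a Br_{r,t}(omega_0)-module
 structure rho together with commuting linear operators Y 1, ..., Y (r+t)
 (the action of C[y_1,...,y_(r+t)]) satisfying the defining relations.\<close>
definition VBr_module :: "(complex \<Rightarrow> 'v::ab_group_add \<Rightarrow> 'v) \<Rightarrow> nat \<Rightarrow> nat \<Rightarrow> (nat \<Rightarrow> complex) \<Rightarrow>
    (diag \<Rightarrow> 'v::ab_group_add \<Rightarrow> 'v) \<Rightarrow> (nat \<Rightarrow> 'v \<Rightarrow> 'v) \<Rightarrow> bool" where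
  "VBr_module sc r t \<omega> \<rho> Y = (let n = r + t; J = {1..<n};
      one = (\<lambda>a. \<rho> (one_d n a)); S = opS r t \<rho>; Sh = opSh r t \<rho>;
      E = opE r t \<rho>; Eh = opEh r t \<rho> in
    vector_space sc \<and> Br_module sc r t (\<omega> 0) \<rho> \<and>
    (\<forall>i \<in> {1..n}. clin sc (Y i)) \<and>
    (\<forall>i \<in> {1..n}. \<forall>j \<in> {1..n}. Y i \<circ> Y j = Y j \<circ> Y i) \<and>
    (\<forall>i \<in> {1..n}. \<forall>a \<in> Seq r t. Y i \<circ> one a = one a \<circ> Y i) \<and>
    (\<forall>i \<in> {1..n}. \<forall>k \<in> J. i \<notin> {k, Suc k} \<longrightarrow>
        Y i \<circ> S k = S k \<circ> Y i \<and> Y i \<circ> Sh k = Sh k \<circ> Y i \<and>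
        Y i \<circ> E k = E k \<circ> Y i \<and> Y i \<circ> Eh k = Eh k \<circ> Y i) \<and>
    (2 \<le> n \<longrightarrow> (\<forall>j. \<forall>a \<in> Seq r t. lab a 1 \<and> \<not> lab a 2 \<longrightarrow>
        (\<forall>v. E 1 ((Y 1 ^^ j) (E 1 (one a v))) = sc (\<omega> j) (E 1 (one a v))))) \<and>
    (\<forall>k \<in> J. \<forall>a \<in> Seq r t. lab a k = lab a (Suc k) \<longrightarrow> (\<forall>v.
        S k (Y k (one a v)) - Y (Suc k) (S k (one a v)) = - one a v \<and>
        S k (Y (Suc k) (one a v)) - Y k (S k (one a v)) = one a v)) \<and>
    (\<forall>k \<in> J. \<forall>v.
        Sh k (Y k v) - Y (Suc k) (Sh k v) = Eh k v \<and>
        Sh k (Y (Suc k) v) - Y k (Sh k v) = - Eh k v) \<and>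
    (\<forall>k \<in> J. \<forall>v.
        Y k (E k v) + Y (Suc k) (E k v) = 0 \<and> E k (Y k v + Y (Suc k) v) = 0 \<and>
        Y k (Eh k v) + Y (Suc k) (Eh k v) = 0 \<and> Eh k (Y k v + Y (Suc k) v) = 0))"

definition wt_space :: "(complex \<Rightarrow> 'v::ab_group_add \<Rightarrow> 'v) \<Rightarrow> nat \<Rightarrow> (diag \<Rightarrow> 'v::ab_group_add \<Rightarrow> 'v) \<Rightarrow> (nat \<Rightarrow> 'v \<Rightarrow> 'v) \<Rightarrow>
    bool list \<Rightarrow> (nat \<Rightarrow> complex) \<Rightarrow> 'v set" where
  "wt_space sc n \<rho> Y a i = {v \<in> range (\<rho> (one_d n a)).
     \<forall>k \<in> {1..n}. \<exists>N. ((\<lambda>w. Y k w - sc (i k) w) ^^ N) v = 0}"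

definition sum_spaces :: "'c set \<Rightarrow> ('c \<Rightarrow> 'v::ab_group_add set) \<Rightarrow> 'v set" where
  "sum_spaces I W = {v. \<exists>F f. finite F \<and> F \<subseteq> I \<and> (\<forall>c \<in> F. f c \<in> W c) \<and> v = (\<Sum>c \<in> F. f c)}"

definition fin_dim :: "(complex \<Rightarrow> 'v::ab_group_add \<Rightarrow> 'v) \<Rightarrow> bool" where
  "fin_dim sc = (\<exists>B :: 'v set. finite B \<and> module.span sc B = UNIV)"

end

theory Submission
  imports Defs "HOL-Computational_Algebra.Fundamental_Theorem_Algebra"
begin

lemma vs_scale0: "vector_space sc \<Longrightarrow> sc c 0 = 0"
proof - assume "vector_space sc" then interpret vector_space sc . show ?thesis by simp qed

lemma lin_vs: "clin sc f \<Longrightarrow> vector_space sc" by (simp add: Vector_Spaces.linear_iff)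
lemma lin_add: "clin sc f \<Longrightarrow> f (x + y) = f x + f y" by (simp add: Vector_Spaces.linear_iff)
lemma lin_scale: "clin sc f \<Longrightarrow> f (sc c x) = sc c (f x)" by (simp add: Vector_Spaces.linear_iff)
lemma lin_zero: "clin sc f \<Longrightarrow> f 0 = 0"
  by (metis add_cancel_right_right lin_add)
lemma lin_neg: "clin sc f \<Longrightarrow> f (- x) = - f x"
  by (metis add_eq_0_iff lin_add lin_zero)
lemma lin_diff: "clin sc f \<Longrightarrow> f (x - y) = f x - f y"
  by (metis diff_conv_add_uminus lin_add lin_neg)
lemma lin_sum: "clin sc f \<Longrightarrow> f (\<Sum>i\<in>A. g i) = (\<Sum>i\<in>A. f (g i))"
  by (induction A rule: infinite_finite_induct) (auto simp: lin_zero lin_add)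

lemma lin_intro: "vector_space sc \<Longrightarrow> (\<And>x y. f (x + y) = f x + f y) \<Longrightarrow> (\<And>c x. f (sc c x) = sc c (f x)) \<Longrightarrow> clin sc f"
  by (simp add: Vector_Spaces.linear_iff)

lemma lin_id: "vector_space sc \<Longrightarrow> clin sc (\<lambda>w. w)"
  by (rule lin_intro) auto

lemma lin_comp: "clin sc f \<Longrightarrow> clin sc g \<Longrightarrow> clin sc (\<lambda>w. f (g w))"
  by (rule lin_intro) (auto simp: lin_vs lin_add lin_scale)

lemma lin_funpow: "clin sc f \<Longrightarrow> clin sc (f ^^ n)"
proof (induction n)
  case 0 then show ?case using lin_id[OF lin_vs[OF 0]] by (simp add: id_def)
next
  case (Suc n) then show ?case using lin_comp[of sc f "f^^n"] by (simp add: o_def)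
qed

lemma lin_plus: "clin sc f \<Longrightarrow> clin sc g \<Longrightarrow> clin sc (\<lambda>w. f w + g w)"
proof -
  assume f: "clin sc f" and g: "clin sc g"
  interpret vector_space sc using lin_vs[OF f] .
  show ?thesis by (rule lin_intro) (auto simp: lin_vs[OF f] lin_add[OF f] lin_add[OF g] lin_scale[OF f] lin_scale[OF g] scale_right_distrib)
qed

lemma lin_minus: "clin sc f \<Longrightarrow> clin sc g \<Longrightarrow> clin sc (\<lambda>w. f w - g w)"
proof -
  assume f: "clin sc f" and g: "clin sc g"
  interpret vector_space sc using lin_vs[OF f] .
  show ?thesis by (rule lin_intro) (auto simp: lin_vs[OF f] lin_add[OF f] lin_add[OF g] lin_scale[OF f] lin_scale[OF g] scale_right_diff_distrib)
qed

lemma lin_scalemap: "vector_space sc \<Longrightarrow> clin sc (\<lambda>w. sc c w)"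
proof -
  assume vs: "vector_space sc"
  interpret vector_space sc using vs .
  show ?thesis by (rule lin_intro) (auto simp: vs scale_right_distrib mult.commute)
qed

lemma lin_sub_scale: "clin sc f \<Longrightarrow> clin sc (\<lambda>w. f w - sc c w)"
  by (rule lin_minus, assumption, rule lin_scalemap[OF lin_vs])

lemma lin_sumfun: "vector_space sc \<Longrightarrow> (\<And>i. i \<in> A \<Longrightarrow> clin sc (F i)) \<Longrightarrow> clin sc (\<lambda>w. \<Sum>i\<in>A. F i w)"
proof (induction A rule: infinite_finite_induct)
  case (infinite A) then show ?case by (intro lin_intro) (auto simp: vs_scale0)
next
  case empty then show ?case by (intro lin_intro) (auto simp: vs_scale0)
next
  case (insert x B) then show ?case using lin_plus[of sc "F x"] by simp
qed

lemma funpow_comm: "(\<And>w. f (g w) = g (f w)) \<Longrightarrow> (f ^^ n) (g w) = g ((f ^^ n) w)"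
  by (induction n) auto

lemma funpow_zero_mono: "clin sc f \<Longrightarrow> (f ^^ N) w = 0 \<Longrightarrow> N \<le> M \<Longrightarrow> (f ^^ M) w = 0"
proof -
  assume f: "clin sc f" and z: "(f ^^ N) w = 0" and le: "N \<le> M"
  have "(f ^^ M) w = (f ^^ (M - N)) ((f ^^ N) w)" using le funpow_add[of "M-N" N f]
    by (simp add: o_def)
  then show ?thesis using z lin_zero[OF lin_funpow[OF f]] by simp
qed

lemma funpow_neg: "clin sc f \<Longrightarrow> ((\<lambda>z. - f z) ^^ n) w = (if even n then (f ^^ n) w else - (f ^^ n) w)"
  by (induction n) (auto simp: lin_neg)

lemma nil_sum:
  assumes P: "clin sc P" and R: "clin sc R" and D: "clin sc D"
    and comm: "\<And>w. P (R w) = R (P w)" and DPR: "\<And>w. D w = P w + R w"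
  shows "(P ^^ m) w = 0 \<Longrightarrow> (R ^^ n) w = 0 \<Longrightarrow> (D ^^ (m + n)) w = 0"
proof (induction "m + n" arbitrary: m n w rule: less_induct)
  case less
  show ?case
  proof (cases "m = 0 \<or> n = 0")
    case True
    then have "w = 0" using less.prems by auto
    then show ?thesis using lin_zero[OF lin_funpow[OF D]] by simp
  next
    case False
    then obtain m' n' where mn: "m = Suc m'" "n = Suc n'" by (metis not0_implies_Suc)
    have a: "(D ^^ (m' + n)) (P w) = 0"
    proof (rule less.hyps)
      show "m' + n < m + n" using mn by simp
      show "(P ^^ m') (P w) = 0" using less.prems(1) mn by (simp add: funpow_swap1)
      show "(R ^^ n) (P w) = 0" using less.prems(2) funpow_comm[of R P n w] comm lin_zero[OF P]
        by metis
    qed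
    have b: "(D ^^ (m + n')) (R w) = 0"
    proof (rule less.hyps)
      show "m + n' < m + n" using mn by simp
      show "(R ^^ n') (R w) = 0" using less.prems(2) mn by (simp add: funpow_swap1)
      show "(P ^^ m) (R w) = 0" using less.prems(1) funpow_comm[of P R m w] comm lin_zero[OF R]
        by metis
    qed
    have "(D ^^ (m + n)) w = (D ^^ (m' + n)) (D w)" using mn by (simp add: funpow_swap1)
    also have "\<dots> = (D ^^ (m' + n)) (P w) + (D ^^ (m' + n)) (R w)"
      using DPR lin_add[OF lin_funpow[OF D]] by metis
    also have "\<dots> = 0" using a b mn by simp
    finally show ?thesis .
  qed
qed

definition closedQ :: "(complex \<Rightarrow> 'v::ab_group_add \<Rightarrow> 'v) \<Rightarrow> ('v \<Rightarrow> 'v) \<Rightarrow> ('v \<Rightarrow> bool) \<Rightarrow> bool" where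
  "closedQ sc x Q = (Q 0 \<and> (\<forall>u w. Q u \<longrightarrow> Q w \<longrightarrow> Q (u + w)) \<and> (\<forall>c w. Q w \<longrightarrow> Q (sc c w)) \<and> (\<forall>w. Q w \<longrightarrow> Q (x w)))"

lemma cQ_0: "closedQ sc x Q \<Longrightarrow> Q 0" by (simp add: closedQ_def)
lemma cQ_add: "closedQ sc x Q \<Longrightarrow> Q u \<Longrightarrow> Q w \<Longrightarrow> Q (u + w)" by (simp add: closedQ_def)
lemma cQ_scale: "closedQ sc x Q \<Longrightarrow> Q w \<Longrightarrow> Q (sc c w)" by (simp add: closedQ_def)
lemma cQ_x: "closedQ sc x Q \<Longrightarrow> Q w \<Longrightarrow> Q (x w)" by (simp add: closedQ_def)
lemma cQ_neg: "vector_space sc \<Longrightarrow> closedQ sc x Q \<Longrightarrow> Q w \<Longrightarrow> Q (- w)"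
proof -
  assume vs: "vector_space sc" and q: "closedQ sc x Q" "Q w"
  interpret vector_space sc by (rule vs)
  have "- w = sc (-1) w" by (simp add: scale_minus_left)
  then show ?thesis using cQ_scale[OF q] by metis
qed
lemma cQ_diff: "vector_space sc \<Longrightarrow> closedQ sc x Q \<Longrightarrow> Q u \<Longrightarrow> Q w \<Longrightarrow> Q (u - w)"
  by (metis cQ_add cQ_neg diff_conv_add_uminus)
lemma cQ_sum: "closedQ sc x Q \<Longrightarrow> (\<And>i. i \<in> A \<Longrightarrow> Q (g i)) \<Longrightarrow> Q (\<Sum>i\<in>A. g i)"
  by (induction A rule: infinite_finite_induct) (auto simp: cQ_0 cQ_add)
lemma cQ_T: "vector_space sc \<Longrightarrow> closedQ sc x Q \<Longrightarrow> Q w \<Longrightarrow> Q (x w - sc c w)"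
  by (simp add: cQ_diff cQ_scale cQ_x)
lemma cQ_Tpow: "vector_space sc \<Longrightarrow> closedQ sc x Q \<Longrightarrow> Q w \<Longrightarrow> Q (((\<lambda>w. x w - sc c w) ^^ n) w)"
  by (induction n) (auto simp: cQ_T)

lemma inv_lemma:
  assumes x: "clin sc x" and Q: "closedQ sc x Q" and nz: "\<nu> \<noteq> z"
  shows "Q f \<Longrightarrow> ((\<lambda>w. x w - sc \<nu> w) ^^ N) f = 0 \<Longrightarrow>
     \<exists>g. Q g \<and> ((\<lambda>w. x w - sc \<nu> w) ^^ N) g = 0 \<and> x g - sc z g = f"
proof (induction N arbitrary: f)
  have vs: "vector_space sc" using lin_vs[OF x] .
  interpret vector_space sc by (rule vs)
  case 0 then show ?case using cQ_0[OF Q] lin_zero[OF x] by (intro exI[of _ 0]) auto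
next
  have vs: "vector_space sc" using lin_vs[OF x] .
  interpret vector_space sc by (rule vs)
  case (Suc N)
  define T where "T = (\<lambda>w. x w - sc \<nu> w)"
  have T: "clin sc T" unfolding T_def by (rule lin_sub_scale[OF x])
  have QTf: "Q (T f)" unfolding T_def using cQ_T[OF vs Q Suc.prems(1)] .
  have "(T ^^ N) (T f) = 0" using Suc.prems(2) unfolding T_def[symmetric] by (simp add: funpow_swap1)
  then obtain g' where g': "Q g'" "(T ^^ N) g' = 0" "x g' - sc z g' = T f"
    using Suc.IH[OF QTf] unfolding T_def by blast
  define \<delta> where "\<delta> = \<nu> - z"
  have d: "\<delta> \<noteq> 0" using nz by (simp add: \<delta>_def)
  define g where "g = sc (1/\<delta>) (f - g')"
  have "Q g" unfolding g_def by (rule cQ_scale[OF Q cQ_diff[OF vs Q Suc.prems(1) g'(1)]])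
  moreover have "(T ^^ Suc N) g = 0"
  proof -
    have 1: "(T ^^ Suc N) g' = 0" using g'(2) lin_zero[OF T] by simp
    have 2: "(T ^^ Suc N) f = 0" using Suc.prems(2) unfolding T_def .
    have "(T ^^ Suc N) g = sc (1/\<delta>) ((T ^^ Suc N) f - (T ^^ Suc N) g')" unfolding g_def
      by (simp only: lin_scale[OF lin_funpow[OF T]] lin_diff[OF lin_funpow[OF T]])
    then show ?thesis using 1 2 by simp
  qed
  moreover have "x g - sc z g = f"
  proof -
    have "x g - sc z g = sc (1/\<delta>) ((x f - sc z f) - (x g' - sc z g'))"
      unfolding g_def using lin_scale[OF x] lin_diff[OF x]
      by (simp add: scale_right_diff_distrib mult.commute)
    also have "\<dots> = sc (1/\<delta>) (sc \<nu> f - sc z f)" using g'(3) by (simp add: T_def)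
    also have "\<dots> = sc (1/\<delta>) (sc \<delta> f)" by (simp add: \<delta>_def scale_left_diff_distrib)
    also have "\<dots> = f" using d by simp
    finally show ?thesis .
  qed
  ultimately show ?case unfolding T_def by blast
qed

definition opoly :: "(complex \<Rightarrow> 'v::ab_group_add \<Rightarrow> 'v) \<Rightarrow> ('v \<Rightarrow> 'v) \<Rightarrow> complex poly \<Rightarrow> 'v \<Rightarrow> 'v" where
  "opoly sc x p w = (\<Sum>j\<le>degree p. sc (coeff p j) ((x ^^ j) w))"

context
  fixes sc :: "complex \<Rightarrow> 'v::ab_group_add \<Rightarrow> 'v" and x :: "'v \<Rightarrow> 'v"
  assumes x: "clin sc x"
begin

interpretation vector_space sc by (rule lin_vs[OF x])

lemma opoly_bound: "degree p \<le> m \<Longrightarrow> opoly sc x p w = (\<Sum>j\<le>m. sc (coeff p j) ((x ^^ j) w))"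
proof -
  assume m: "degree p \<le> m"
  have "(\<Sum>j\<le>m. sc (coeff p j) ((x ^^ j) w)) = (\<Sum>j\<le>degree p. sc (coeff p j) ((x ^^ j) w))"
  proof (rule sum.mono_neutral_right)
    show "finite {..m}" by simp
    show "{..degree p} \<subseteq> {..m}" using m by auto
    show "\<forall>i\<in>{..m} - {..degree p}. sc (coeff p i) ((x ^^ i) w) = 0"
      by (auto simp: coeff_eq_0)
  qed
  then show ?thesis by (simp add: opoly_def)
qed

lemma opoly_pCons: "opoly sc x (pCons a p) w = sc a w + x (opoly sc x p w)"
proof -
  have "opoly sc x (pCons a p) w = (\<Sum>j\<le>Suc (degree p). sc (coeff (pCons a p) j) ((x ^^ j) w))"
    by (rule opoly_bound) (simp add: degree_pCons_le)
  also have "\<dots> = sc a w + (\<Sum>j\<le>degree p. sc (coeff p j) ((x ^^ Suc j) w))"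
    by (subst sum.atMost_Suc_shift) simp
  also have "\<dots> = sc a w + x (opoly sc x p w)"
    by (simp add: opoly_def lin_sum[OF x] lin_scale[OF x])
  finally show ?thesis .
qed

lemma opoly_0: "opoly sc x 0 w = 0" by (simp add: opoly_def)

lemma opoly_lin: "clin sc (opoly sc x p)"
  unfolding opoly_def
  by (intro lin_sumfun lin_vs[OF x] lin_comp[OF lin_scalemap[OF lin_vs[OF x]] lin_funpow[OF x]])

lemma opoly_add: "opoly sc x (p + q) w = opoly sc x p w + opoly sc x q w"
proof (induction p arbitrary: q rule: pCons_induct)
  case 0 then show ?case by (simp add: opoly_0)
next
  case (pCons a p)
  obtain b q' where q: "q = pCons b q'" by (cases q) auto
  show ?case unfolding q add_pCons opoly_pCons pCons.IH lin_add[OF x]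
    by (simp add: scale_left_distrib algebra_simps)
qed

lemma opoly_smult: "opoly sc x (smult c p) w = sc c (opoly sc x p w)"
proof (induction p rule: pCons_induct)
  case 0 then show ?case by (simp add: opoly_0)
next
  case (pCons a p)
  show ?case by (simp add: opoly_pCons pCons.IH lin_scale[OF x] scale_right_distrib)
qed

lemma opoly_mult: "opoly sc x (p * q) w = opoly sc x p (opoly sc x q w)"
proof (induction p rule: pCons_induct)
  case 0 then show ?case by (simp add: opoly_0)
next
  case (pCons a p)
  have "opoly sc x (pCons a p * q) w = opoly sc x (smult a q + pCons 0 (p * q)) w" by simp
  also have "\<dots> = sc a (opoly sc x q w) + x (opoly sc x p (opoly sc x q w))"
    by (simp only: opoly_add opoly_smult opoly_pCons pCons.IH) simp
  also have "\<dots> = opoly sc x (pCons a p) (opoly sc x q w)" by (simp add: opoly_pCons)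
  finally show ?case .
qed

lemma opoly_diff: "opoly sc x (p - q) w = opoly sc x p w - opoly sc x q w"
  using opoly_add[of "p - q" q w] by (simp add: algebra_simps)

lemma opoly_sum: "opoly sc x (\<Sum>i\<in>A. f i) w = (\<Sum>i\<in>A. opoly sc x (f i) w)"
  by (induction A rule: infinite_finite_induct) (auto simp: opoly_0 opoly_add)

lemma opoly_monom: "opoly sc x (monom c j) w = sc c ((x ^^ j) w)"
proof -
  have "opoly sc x (monom c j) w = (\<Sum>i\<le>j. sc (coeff (monom c j) i) ((x ^^ i) w))"
    by (rule opoly_bound) (simp add: degree_monom_le)
  also have "\<dots> = (\<Sum>i\<le>j. if j = i then sc c ((x ^^ i) w) else 0)"
    by (rule sum.cong) (auto simp: coeff_monom)
  also have "\<dots> = sc c ((x ^^ j) w)" by simp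
  finally show ?thesis .
qed

lemma opoly_lin_factor: "opoly sc x [:-z, 1:] w = x w - sc z w"
  by (simp add: opoly_pCons opoly_0 lin_zero[OF x] scale_minus_left)

end

lemma krylov:
  assumes fd: "fin_dim sc" and x: "clin sc x"
  shows "\<exists>p. p \<noteq> 0 \<and> opoly sc x p u = 0"
proof -
  interpret vector_space sc by (rule lin_vs[OF x])
  obtain B where B: "finite B" "span B = UNIV" using fd unfolding fin_dim_def by blast
  define d where "d = card B"
  define f where "f = (\<lambda>j. (x ^^ j) u)"
  show ?thesis
  proof (cases "inj_on f {..d}")
    case True
    have cS: "card (f ` {..d}) = Suc d" using True by (simp add: card_image)
    have "dependent (f ` {..d})"
    proof (rule ccontr)
      assume "\<not> dependent (f ` {..d})"
      then have "card (f ` {..d}) \<le> card B" using independent_span_bound[OF B(1)] B(2) by blast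
      then show False using cS d_def by simp
    qed
    then obtain t c where t: "finite t" "t \<subseteq> f ` {..d}" "(\<Sum>v\<in>t. sc (c v) v) = 0" "\<exists>v\<in>t. c v \<noteq> 0"
      unfolding dependent_explicit by blast
    define cf where "cf j = (if f j \<in> t then c (f j) else 0)" for j
    define p where "p = (\<Sum>j\<le>d. monom (cf j) j)"
    define J where "J = {j \<in> {..d}. f j \<in> t}"
    have tJ: "t = f ` J" using t(2) unfolding J_def by auto
    have injJ: "inj_on f J" using True unfolding J_def by (rule inj_on_subset) auto
    have "opoly sc x p u = (\<Sum>j\<le>d. sc (cf j) (f j))"
      unfolding p_def by (simp add: opoly_sum[OF x] opoly_monom[OF x] f_def)
    also have "\<dots> = (\<Sum>j\<le>d. if f j \<in> t then sc (c (f j)) (f j) else 0)"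
      by (rule sum.cong) (auto simp: cf_def)
    also have "\<dots> = (\<Sum>j\<in>J. sc (c (f j)) (f j))"
      unfolding J_def by (rule sym, rule sum.inter_filter) simp
    also have "\<dots> = (\<Sum>v\<in>t. sc (c v) v)" unfolding tJ by (simp add: sum.reindex[OF injJ])
    finally have 1: "opoly sc x p u = 0" using t(3) by simp
    obtain v0 where v0: "v0 \<in> t" "c v0 \<noteq> 0" using t(4) by blast
    then obtain j0 where j0: "j0 \<le> d" "f j0 = v0" using t(2) by auto
    have "coeff p j0 = cf j0" unfolding p_def coeff_sum using j0 by (simp add: coeff_monom)
    then have "coeff p j0 \<noteq> 0" using v0 j0 by (simp add: cf_def)
    then have "p \<noteq> 0" by auto
    with 1 show ?thesis by blast
  next
    case False
    then obtain i j where ij: "i \<le> d" "j \<le> d" "i \<noteq> j" "f i = f j" unfolding inj_on_def by auto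
    define p :: "complex poly" where "p = monom 1 i - monom 1 j"
    have "coeff p i = 1" using ij by (simp add: p_def coeff_monom)
    then have "p \<noteq> 0" by auto
    moreover have "opoly sc x p u = 0" unfolding p_def
      using ij by (simp add: opoly_diff[OF x] opoly_monom[OF x] f_def)
    ultimately show ?thesis by blast
  qed
qed

lemma decomp:
  assumes x: "clin sc x" and Q: "closedQ sc x Q"
  shows "p \<noteq> 0 \<Longrightarrow> Q u \<Longrightarrow> opoly sc x p u = 0 \<Longrightarrow>
    \<exists>F f. finite F \<and> (\<forall>l\<in>F. Q (f l) \<and> (\<exists>N. ((\<lambda>w. x w - sc l w) ^^ N) (f l) = 0)) \<and> u = (\<Sum>l\<in>F. f l)"
proof (induction "degree p" arbitrary: p u rule: less_induct)
  case less
  have vs: "vector_space sc" by (rule lin_vs[OF x])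
  interpret vector_space sc by (rule vs)
  show ?case
  proof (cases "degree p = 0")
    case True
    have "opoly sc x p u = (\<Sum>j\<le>0. sc (coeff p j) ((x ^^ j) u))" by (rule opoly_bound[OF x]) (simp add: True)
    then have "sc (coeff p 0) u = 0" using less.prems(3) by simp
    moreover have "coeff p 0 \<noteq> 0" using less.prems(1) True by (metis leading_coeff_0_iff)
    ultimately have "u = 0" by simp
    then show ?thesis by (intro exI[of _ "{}"]) auto
  next
    case False
    then have "\<not> constant (poly p)" by (simp add: constant_degree)
    then obtain z where "poly p z = 0" using fundamental_theorem_of_algebra by blast
    then have "[:-z, 1:] dvd p" by (simp add: poly_eq_0_iff_dvd)
    then obtain q where pq: "p = [:-z, 1:] * q" by (auto elim: dvdE)
    have q0: "q \<noteq> 0" using less.prems(1) pq by auto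
    have "degree p = Suc (degree q)" unfolding pq using q0 by (subst degree_mult_eq) auto
    then have dq: "degree q < degree p" by simp
    define T where "T = (\<lambda>\<mu> w. x w - sc \<mu> w)"
    have Tlin: "clin sc (T \<mu>)" for \<mu> unfolding T_def by (rule lin_sub_scale[OF x])
    define w where "w = T z u"
    have Qw: "Q w" unfolding w_def T_def by (rule cQ_T[OF vs Q less.prems(2)])
    have "opoly sc x p u = opoly sc x (q * [:-z,1:]) u" unfolding pq by (simp only: mult.commute)
    also have "\<dots> = opoly sc x q (opoly sc x [:-z,1:] u)" by (rule opoly_mult[OF x])
    also have "\<dots> = opoly sc x q w" by (simp only: opoly_lin_factor[OF x] w_def T_def)
    finally have "opoly sc x q w = opoly sc x p u" by simp
    then obtain F f where F: "finite F" "\<forall>l\<in>F. Q (f l) \<and> (\<exists>N. (T l ^^ N) (f l) = 0)" "w = (\<Sum>l\<in>F. f l)"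
      using less.hyps[OF dq q0 Qw] less.prems(3) unfolding T_def by auto
    have "\<forall>l\<in>F - {z}. \<exists>g. Q g \<and> (\<exists>N. (T l ^^ N) g = 0) \<and> T z g = f l"
    proof
      fix l assume l: "l \<in> F - {z}"
      then obtain N where N: "(T l ^^ N) (f l) = 0" "Q (f l)" using F(2) by blast
      show "\<exists>g. Q g \<and> (\<exists>N. (T l ^^ N) g = 0) \<and> T z g = f l"
        using inv_lemma[OF x Q, of l z, OF _ N(2)] N(1) l unfolding T_def by blast
    qed
    then obtain g where g: "\<forall>l\<in>F - {z}. Q (g l) \<and> (\<exists>N. (T l ^^ N) (g l)= 0) \<and> T z (g l) = f l"
      by metis
    define h where "h = u - (\<Sum>l\<in>F - {z}. g l)"
    have Qh: "Q h" unfolding h_def using g by (intro cQ_diff[OF vs Q less.prems(2)] cQ_sum[OF Q]) auto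
    have "T z h = w - (\<Sum>l\<in>F - {z}. T z (g l))"
      unfolding h_def w_def by (simp add: lin_diff[OF Tlin] lin_sum[OF Tlin])
    also have "\<dots> = w - (\<Sum>l\<in>F - {z}. f l)" using g by simp
    also have "\<dots> = (if z \<in> F then f z else 0)"
      using F(1,3) by (auto simp: sum.remove)
    finally have Th: "T z h = (if z \<in> F then f z else 0)" .
    have "\<exists>N. (T z ^^ N) h = 0"
    proof (cases "z \<in> F")
      case True
      then obtain N where "(T z ^^ N) (f z) = 0" using F(2) by blast
      then have "(T z ^^ Suc N) h = 0" using Th True by (simp add: funpow_swap1)
      then show ?thesis by blast
    next
      case False
      then have "(T z ^^ 1) h = 0" using Th by simp
      then show ?thesis by blast
    qed
    define f' where "f' = (\<lambda>\<mu>. if \<mu> = z then h else g \<mu>)"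
    have "u = (\<Sum>\<mu>\<in>insert z F. f' \<mu>)"
      using F(1) by (simp add: sum.insert_remove f'_def h_def)
    moreover have "\<forall>\<mu>\<in>insert z F. Q (f' \<mu>) \<and> (\<exists>N. (T \<mu> ^^ N) (f' \<mu>) = 0)"
      using g Qh \<open>\<exists>N. (T z ^^ N) h = 0\<close> by (auto simp: f'_def)
    ultimately show ?thesis using F(1) unfolding T_def by (intro exI[of _ "insert z F"] exI[of _ f']) auto
  qed
qed

lemma lab_sseq:
  assumes "length a = n" "k \<in> {1..<n}" "j \<in> {1..n}"
  shows "lab (sseq k a) j = lab a (if j = k then Suc k else if j = Suc k then k else j)"
  using assms unfolding lab_def sseq_def
  by (auto simp: nth_list_update)

lemma seq_sseq:
  assumes a: "a \<in> Seq r t" and k: "k \<in> {1..<r+t}"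
  shows "sseq k a \<in> Seq r t"
proof -
  define \<tau> where "\<tau> j = (if j = k then Suc k else if j = Suc k then k else j)" for j
  have len: "length a = r + t" using a by (simp add: Seq_def)
  have inj: "inj \<tau>" unfolding inj_def \<tau>_def by auto
  have eq: "lab (sseq k a) j = lab a (\<tau> j)" if "j \<in> {1..r+t}" for j
    using lab_sseq[OF len k that] by (simp add: \<tau>_def)
  have "{j \<in> {1..r+t}. lab (sseq k a) j} = \<tau> ` {j \<in> {1..r+t}. lab a j}"
  proof (rule set_eqI)
    fix j
    show "j \<in> {j \<in> {1..r+t}. lab (sseq k a) j} \<longleftrightarrow> j \<in> \<tau> ` {j \<in> {1..r+t}. lab a j}"
    proof
      assume "j \<in> {j \<in> {1..r+t}. lab (sseq k a) j}"
      then have j: "j \<in> {1..r+t}" "lab a (\<tau> j)" using eq by auto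
      have "\<tau> (\<tau> j) = j" "\<tau> j \<in> {1..r+t}" using j(1) k by (auto simp: \<tau>_def)
      then show "j \<in> \<tau> ` {j \<in> {1..r+t}. lab a j}" using j by (metis (mono_tags, lifting) image_eqI mem_Collect_eq)
    next
      assume "j \<in> \<tau> ` {j \<in> {1..r+t}. lab a j}"
      then obtain i where i: "i \<in> {1..r+t}" "lab a i" "j = \<tau> i" by auto
      have "\<tau> j = i" "j \<in> {1..r+t}" using i k by (auto simp: \<tau>_def)
      then show "j \<in> {j \<in> {1..r+t}. lab (sseq k a) j}" using eq[of j] i by simp
    qed
  qed
  then have "card {j \<in> {1..r+t}. lab (sseq k a) j} = card {j \<in> {1..r+t}. lab a j}"
    using card_image[OF inj_on_subset[OF inj]] by simp
  then show ?thesis using a len by (simp add: Seq_def sseq_def)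
qed

lemma pts_Bot[simp]: "Bot j \<in> pts n \<longleftrightarrow> j \<in> {1..n}" by (auto simp: pts_def)
lemma pts_Top[simp]: "Top j \<in> pts n \<longleftrightarrow> j \<in> {1..n}" by (auto simp: pts_def)
lemma pts_cases: "x \<in> pts n \<Longrightarrow> (\<And>j. x = Bot j \<Longrightarrow> j \<in> {1..n} \<Longrightarrow> P) \<Longrightarrow> (\<And>j. x = Top j \<Longrightarrow> j \<in> {1..n} \<Longrightarrow> P) \<Longrightarrow> P"
  by (auto simp: pts_def)

lemma diag_one: "a \<in> Seq r t \<Longrightarrow> is_diag r t (one_d (r+t) a)"
  unfolding is_diag_def one_d_def
  apply (auto simp: vert_def elim!: pts_cases split: pt.splits)
  done

lemma diag_sh:
  assumes a: "a \<in> Seq r t" and k: "k \<in> {1..<r+t}"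
  shows "is_diag r t (sh_d (r+t) k a)"
proof -
  have len: "length a = r + t" using a by (simp add: Seq_def)
  have s: "sseq k a \<in> Seq r t" by (rule seq_sseq[OF a k])
  show ?thesis
    unfolding is_diag_def sh_d_def using a s k
    apply (auto simp: cross_m_def vert_def lab_sseq[OF len k] elim!: pts_cases split: pt.splits if_splits)
    done
qed

lemma decomp_full:
  assumes fd: "fin_dim sc" and x: "clin sc x" and Q: "closedQ sc x Q" and u: "Q u"
  shows "\<exists>F f. finite F \<and> (\<forall>l\<in>F. Q (f l) \<and> (\<exists>N. ((\<lambda>w. x w - sc l w) ^^ N) (f l) = 0)) \<and> u = (\<Sum>l\<in>F. f l)"
proof -
  obtain p where "p \<noteq> 0" "opoly sc x p u = 0" using krylov[OF fd x] by blast
  then show ?thesis using decomp[OF x Q] u by blast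
qed

lemma comm_T:
  assumes f: "clin sc f" and g: "clin sc g" and fg: "\<And>w. f (g w) = g (f w)"
  shows "(\<lambda>w. f w - sc a w) ((\<lambda>w. g w - sc b w) w) = (\<lambda>w. g w - sc b w) ((\<lambda>w. f w - sc a w) w)"
proof -
  interpret vector_space sc by (rule lin_vs[OF f])
  show ?thesis using fg by (simp add: lin_diff[OF f] lin_diff[OF g] lin_scale[OF f] lin_scale[OF g]
      scale_right_diff_distrib mult.commute algebra_simps)
qed

lemma T_comm_lin:
  assumes f: "clin sc f" and S: "clin sc S" and fS: "\<And>w. f (S w) = S (f w)"
  shows "(\<lambda>w. f w - sc a w) (S w) = S ((\<lambda>w. f w - sc a w) w)"
  using fS by (simp add: lin_diff[OF S] lin_scale[OF S])

lemma E_zero: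
  assumes A: "clin sc A" and B: "clin sc B" and E: "clin sc E"
    and comm: "\<And>w. A (B w) = B (A w)" and AB: "\<And>w. E (A w) + E (B w) = sc c (E w)" and c: "c \<noteq> 0"
  shows "(A ^^ m) w = 0 \<Longrightarrow> (B ^^ n) w = 0 \<Longrightarrow> E w = 0"
proof (induction "m + n" arbitrary: m n w rule: less_induct)
  case less
  interpret vector_space sc by (rule lin_vs[OF A])
  show ?case
  proof (cases "m = 0 \<or> n = 0")
    case True
    then have "w = 0" using less.prems by auto
    then show ?thesis using lin_zero[OF E] by simp
  next
    case False
    then obtain m' n' where mn: "m = Suc m'" "n = Suc n'" by (metis not0_implies_Suc)
    have a: "E (A w) = 0"
    proof (rule less.hyps)
      show "m' + n < m + n" using mn by simp
      show "(A ^^ m') (A w) = 0" using less.prems(1) mn by (simp add: funpow_swap1)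
      show "(B ^^ n) (A w) = 0" using less.prems(2) funpow_comm[of B A n w] comm lin_zero[OF A]
        by metis
    qed
    have b: "E (B w) = 0"
    proof (rule less.hyps)
      show "m + n' < m + n" using mn by simp
      show "(B ^^ n') (B w) = 0" using less.prems(2) mn by (simp add: funpow_swap1)
      show "(A ^^ m) (B w) = 0" using less.prems(1) funpow_comm[of A B m w] comm lin_zero[OF B]
        by metis
    qed
    have "sc c (E w) = 0" using AB[of w] a b by simp
    then show ?thesis using c by simp
  qed
qed

lemma transfer_pow:
  assumes P: "\<And>m. P ((B ^^ m) v)" and XS: "\<And>w. P w \<Longrightarrow> X (S w) = S (B w)"
  shows "(X ^^ m) (S v) = S ((B ^^ m) v)"
  by (induction m) (auto simp: XS P)

theorem lemma3p3:
  fixes sc :: "complex \<Rightarrow> 'v::ab_group_add \<Rightarrow> 'v" and r t :: nat and \<omega> :: "nat \<Rightarrow> complex"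
    and \<rho> :: "diag \<Rightarrow> 'v \<Rightarrow> 'v" and Y :: "nat \<Rightarrow> 'v \<Rightarrow> 'v"
    and a :: "bool list" and k :: nat and i :: "nat \<Rightarrow> complex"
  assumes "fin_dim sc"
    and "VBr_module sc r t \<omega> \<rho> Y"
    and "a \<in> Seq r t"
    and "k \<in> {1..<r+t}"
    and "sseq k a \<noteq> a"
  defines "I \<equiv> {i'. (\<forall>j \<in> {1..r+t} - {k, Suc k}. i' j = i j) \<and> i' k + i' (Suc k) = 0}"
  shows "(i k + i (Suc k) \<noteq> 0 \<longrightarrow>
            opSh r t \<rho> k ` wt_space sc (r+t) \<rho> Y a i \<subseteq> wt_space sc (r+t) \<rho> Y (sseq k a) (svec k i))
       \<and> (i k + i (Suc k) = 0 \<longrightarrow>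
            opSh r t \<rho> k ` wt_space sc (r+t) \<rho> Y a i \<subseteq>
              sum_spaces I (wt_space sc (r+t) \<rho> Y (sseq k a)))"
proof -
  note M = assms(2)[unfolded VBr_module_def Let_def]
  define n where "n = r + t"
  note C1 = M[THEN conjunct2]
  note C2 = C1[THEN conjunct2]
  note C3 = C2[THEN conjunct2]
  note C4 = C3[THEN conjunct2]
  note C5 = C4[THEN conjunct2]
  note C6 = C5[THEN conjunct2]
  note C7 = C6[THEN conjunct2]
  note C8 = C7[THEN conjunct2]
  note C9 = C8[THEN conjunct2]
  have vs: "vector_space sc" using M[THEN conjunct1] .
  interpret vector_space sc by (rule vs)
  have Br: "Br_module sc r t (\<omega> 0) \<rho>" using C1[THEN conjunct1] .
  have Ylin: "\<And>j. j \<in> {1..n} \<Longrightarrow> clin sc (Y j)" using C2[THEN conjunct1] n_def by blast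
  have Ycomm: "\<And>j l w. j \<in> {1..n} \<Longrightarrow> l \<in> {1..n} \<Longrightarrow> Y j (Y l w) = Y l (Y j w)"
  proof -
    fix j l w assume "j \<in> {1..n}" "l \<in> {1..n}"
    then have "Y j \<circ> Y l = Y l \<circ> Y j" using C3[THEN conjunct1] n_def by blast
    then show "Y j (Y l w) = Y l (Y j w)" by (metis comp_apply)
  qed
  have Yone: "\<And>j b w. j \<in> {1..n} \<Longrightarrow> b \<in> Seq r t \<Longrightarrow> Y j (\<rho> (one_d n b) w) = \<rho> (one_d n b) (Y j w)"
  proof -
    fix j b w assume "j \<in> {1..n}" "b \<in> Seq r t"
    then have "Y j \<circ> \<rho> (one_d n b) = \<rho> (one_d n b) \<circ> Y j" using C4[THEN conjunct1] n_def by blast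
    then show "Y j (\<rho> (one_d n b) w) = \<rho> (one_d n b) (Y j w)" by (metis comp_apply)
  qed
  have k: "k \<in> {1..<n}" using assms(4) n_def by simp
  have k1: "k \<in> {1..n}" "Suc k \<in> {1..n}" "k \<noteq> Suc k" using k by auto
  have YSh: "\<And>j w. j \<in> {1..n} \<Longrightarrow> j \<notin> {k, Suc k} \<Longrightarrow> Y j (opSh r t \<rho> k w) = opSh r t \<rho> k (Y j w)"
  proof -
    fix j w assume "j \<in> {1..n}" "j \<notin> {k, Suc k}"
    then have "Y j \<circ> opSh r t \<rho> k = opSh r t \<rho> k \<circ> Y j" using C5[THEN conjunct1] n_def k by blast
    then show "Y j (opSh r t \<rho> k w) = opSh r t \<rho> k (Y j w)" by (metis comp_apply)
  qed
  have R12: "\<And>w. opSh r t \<rho> k (Y k w) - Y (Suc k) (opSh r t \<rho> k w) = opEh r t \<rho> k w \<and>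
        opSh r t \<rho> k (Y (Suc k) w) - Y k (opSh r t \<rho> k w) = - opEh r t \<rho> k w"
    using C8[THEN conjunct1] n_def k by blast
  have R3: "\<And>w. opEh r t \<rho> k (Y k w + Y (Suc k) w) = 0"
    using C9 n_def k by blast
  have diags: "\<forall>D. is_diag r t D \<longrightarrow> clin sc (\<rho> D)" using Br by (simp add: Br_module_def)
  have sumone: "\<And>v. (\<Sum>b \<in> Seq r t. \<rho> (one_d n b) v) = v" using Br n_def by (simp add: Br_module_def)
  have comp0: "\<And>D1 D2 v. is_diag r t D1 \<Longrightarrow> is_diag r t D2 \<Longrightarrow> fst D1 \<noteq> fst (snd D2) \<Longrightarrow> \<rho> D1 (\<rho> D2 v) = 0"
  proof -
    fix D1 D2 v assume d: "is_diag r t D1" "is_diag r t D2" "fst D1 \<noteq> fst (snd D2)"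
    have BrA: "\<forall>D1 D2. is_diag r t D1 \<longrightarrow> is_diag r t D2 \<longrightarrow>
        \<rho> D1 \<circ> \<rho> D2 = (if fst D1 = fst (snd D2)
           then (\<lambda>v. sc (\<omega> 0 ^ dloops (r+t) D1 D2) (\<rho> (dcomp (r+t) D1 D2) v)) else (\<lambda>v. 0))"
      using Br unfolding Br_module_def by blast
    have "\<rho> D1 \<circ> \<rho> D2 = (\<lambda>v. 0)" using BrA[rule_format, OF d(1) d(2)] d(3) by (simp only: if_False)
    then show "\<rho> D1 (\<rho> D2 v) = 0" by (metis comp_apply)
  qed
  have finL: "finite {xs. set xs \<subseteq> (UNIV::bool set) \<and> length xs = r + t}"
    by (rule finite_lists_length_eq) simp
  have finSeq: "finite (Seq r t)"
    by (rule finite_subset[OF _ finL]) (auto simp: Seq_def)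
  define sa where "sa = sseq k a"
  have sa: "sa \<in> Seq r t" unfolding sa_def by (rule seq_sseq[OF assms(3) assms(4)])
  define one where "one b = \<rho> (one_d n b)" for b
  have onelin: "\<And>b. b \<in> Seq r t \<Longrightarrow> clin sc (one b)" unfolding one_def n_def using diags diag_one by blast
  define Sh where "Sh = opSh r t \<rho> k"
  define Eh where "Eh = opEh r t \<rho> k"
  have shlin: "\<And>b. b \<in> Seq r t \<Longrightarrow> clin sc (\<rho> (sh_d n k b))" unfolding n_def using diags diag_sh assms(4) by blast
  have Shlin: "clin sc Sh" unfolding Sh_def opSh_def n_def
    by (rule lin_sumfun[OF vs]) (use shlin n_def in auto)
  define x where "x = Y k"
  define y where "y = Y (Suc k)"
  have x: "clin sc x" unfolding x_def by (rule Ylin[OF k1(1)])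
  have y: "clin sc y" unfolding y_def by (rule Ylin[OF k1(2)])
  have xy: "\<And>w. x (y w) = y (x w)" unfolding x_def y_def by (rule Ycomm[OF k1(1) k1(2)])
  have R1: "\<And>w. Sh (x w) - y (Sh w) = Eh w" unfolding Sh_def Eh_def x_def y_def by (rule R12[THEN conjunct1])
  have R2: "\<And>w. Sh (y w) - x (Sh w) = - Eh w" unfolding Sh_def Eh_def x_def y_def by (rule R12[THEN conjunct2])
  have R3': "\<And>w. Eh (x w + y w) = 0" unfolding Eh_def x_def y_def by (rule R3)
  have Ehd: "Eh = (\<lambda>w. Sh (x w) - y (Sh w))" by (rule ext, rule sym, rule R1)
  have Ehlin: "clin sc Eh" unfolding Ehd by (rule lin_minus[OF lin_comp[OF Shlin x] lin_comp[OF y Shlin]])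
  have labne: "lab a k \<noteq> lab a (Suc k)"
  proof
    assume "lab a k = lab a (Suc k)"
    then have "a ! (k - 1) = a ! k" using k1 by (simp add: lab_def)
    then have h: "a ! (k - 1) = a ! k" .
    have 1: "a[k - 1 := a ! k] = a" by (simp only: h[symmetric] list_update_id)
    have "sseq k a = a" unfolding sseq_def 1 by (simp only: h list_update_id)
    then show False using assms(5) by simp
  qed
  define good where "good w = (\<forall>b \<in> Seq r t. b \<noteq> sa \<longrightarrow> one b w = 0)" for w
  have good_range: "\<And>w. good w \<Longrightarrow> w \<in> range (\<rho> (one_d n sa))"
  proof -
    fix w assume g: "good w"
    have "w = (\<Sum>b \<in> Seq r t. one b w)" using sumone by (simp add: one_def)
    also have "\<dots> = one sa w + (\<Sum>b \<in> Seq r t - {sa}. one b w)" using finSeq sa by (simp add: sum.remove)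
    also have "\<dots> = one sa w" using g by (simp add: good_def)
    finally show "w \<in> range (\<rho> (one_d n sa))" unfolding one_def by (metis rangeI)
  qed
  have Sh_good: "\<And>u. good (Sh (\<rho> (one_d n a) u))"
  proof -
    fix u
    show "good (Sh (\<rho> (one_d n a) u))" unfolding good_def
    proof (intro ballI impI)
      fix b assume b: "b \<in> Seq r t" "b \<noteq> sa"
      have "one b (Sh (\<rho> (one_d n a) u)) =
        (\<Sum>c \<in> {c \<in> Seq r t. lab c k \<noteq> lab c (Suc k)}. one b (\<rho> (sh_d n k c) (\<rho> (one_d n a) u)))"
        unfolding Sh_def opSh_def n_def by (rule lin_sum[OF onelin[OF b(1), unfolded n_def]])
      also have "\<dots> = 0"
      proof (rule sum.neutral, intro ballI)
        fix c assume c: "c \<in> {c \<in> Seq r t. lab c k \<noteq> lab c (Suc k)}"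
        show "one b (\<rho> (sh_d n k c) (\<rho> (one_d n a) u)) = 0"
        proof (cases "c = a")
          case True
          show ?thesis unfolding one_def True
          proof (rule comp0)
            show "is_diag r t (one_d n b)" unfolding n_def by (rule diag_one[OF b(1)])
            show "is_diag r t (sh_d n k a)" unfolding n_def by (rule diag_sh[OF assms(3,4)])
            show "fst (one_d n b) \<noteq> fst (snd (sh_d n k a))" using b(2) by (simp add: one_d_def sh_d_def sa_def)
          qed
        next
          case False
          have c1: "c \<in> Seq r t" using c by simp
          have "\<rho> (sh_d n k c) (\<rho> (one_d n a) u) = 0"
          proof (rule comp0)
            show "is_diag r t (one_d n a)" unfolding n_def by (rule diag_one[OF assms(3)])
            show "is_diag r t (sh_d n k c)" unfolding n_def by (rule diag_sh[OF c1 assms(4)])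
            show "fst (sh_d n k c) \<noteq> fst (snd (one_d n a))" using False by (simp add: one_d_def sh_d_def)
          qed
          then show ?thesis using lin_zero[OF onelin[OF b(1)]] by simp
        qed
      qed
      finally show "one b (Sh (\<rho> (one_d n a) u)) = 0" .
    qed
  qed
  have good_0: "good 0" unfolding good_def using onelin lin_zero by blast
  have good_add: "\<And>u w. good u \<Longrightarrow> good w \<Longrightarrow> good (u + w)"
  proof -
    fix u w assume g: "good u" "good w"
    show "good (u + w)" unfolding good_def
    proof (intro ballI impI)
      fix b assume b: "b \<in> Seq r t" "b \<noteq> sa"
      have "one b (u + w) = one b u + one b w" by (rule lin_add[OF onelin[OF b(1)]])
      then show "one b (u + w) = 0" using g b by (simp add: good_def)
    qed
  qed
  have good_scale: "\<And>c w. good w \<Longrightarrow> good (sc c w)"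
  proof -
    fix c w assume g: "good w"
    show "good (sc c w)" unfolding good_def
    proof (intro ballI impI)
      fix b assume b: "b \<in> Seq r t" "b \<noteq> sa"
      have "one b (sc c w) = sc c (one b w)" by (rule lin_scale[OF onelin[OF b(1)]])
      then show "one b (sc c w) = 0" using g b by (simp add: good_def)
    qed
  qed
  have good_Y: "\<And>j w. j \<in> {1..n} \<Longrightarrow> good w \<Longrightarrow> good (Y j w)"
  proof -
    fix j w assume j: "j \<in> {1..n}" and g: "good w"
    show "good (Y j w)" unfolding good_def
    proof (intro ballI impI)
      fix b assume b: "b \<in> Seq r t" "b \<noteq> sa"
      have "one b (Y j w) = Y j (one b w)" unfolding one_def using Yone[OF j b(1)] by simp
      then show "one b (Y j w) = 0" using g b lin_zero[OF Ylin[OF j]] by (simp add: good_def)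
    qed
  qed
  define T where "T j = (\<lambda>w. Y j w - sc (i j) w)" for j
  have Tlin: "\<And>j. j \<in> {1..n} \<Longrightarrow> clin sc (T j)" unfolding T_def by (rule lin_sub_scale[OF Ylin])
  have TSh: "\<And>j w N. j \<in> {1..n} \<Longrightarrow> j \<notin> {k, Suc k} \<Longrightarrow> (T j ^^ N) (Sh w) = Sh ((T j ^^ N) w)"
  proof -
    fix j w N assume j: "j \<in> {1..n}" "j \<notin> {k, Suc k}"
    have "\<And>w. T j (Sh w) = Sh (T j w)" unfolding T_def
      by (rule T_comm_lin[OF Ylin[OF j(1)] Shlin]) (use YSh j in \<open>simp add: Sh_def\<close>)
    then show "(T j ^^ N) (Sh w) = Sh ((T j ^^ N) w)" by (rule funpow_comm)
  qed
  show ?thesis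
  proof (intro conjI impI subsetI)
    fix z assume c: "i k + i (Suc k) \<noteq> 0" and z: "z \<in> opSh r t \<rho> k ` wt_space sc (r+t) \<rho> Y a i"
    then obtain v where v: "v \<in> wt_space sc n \<rho> Y a i" "z = Sh v" by (auto simp: Sh_def n_def)
    obtain u where u: "v = \<rho> (one_d n a) u" using v(1) by (auto simp: wt_space_def)
    have vN: "\<And>j. j \<in> {1..n} \<Longrightarrow> \<exists>N. (T j ^^ N) v = 0" using v(1) by (auto simp: wt_space_def T_def)
    define A where "A = T k"
    define B where "B = T (Suc k)"
    have A: "clin sc A" unfolding A_def by (rule Tlin[OF k1(1)])
    have B: "clin sc B" unfolding B_def by (rule Tlin[OF k1(2)])
    have AB: "\<And>w. A (B w) = B (A w)" unfolding A_def B_def T_def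
      using comm_T[OF x y xy] by (simp add: x_def y_def)
    obtain NA where NA: "(A ^^ NA) v = 0" using vN k1 A_def by blast
    obtain NB where NB: "(B ^^ NB) v = 0" using vN k1 B_def by blast
    define cc where "cc = i k + i (Suc k)"
    have ccn: "- cc \<noteq> 0" using c unfolding cc_def by (metis neg_equal_0_iff_equal)
    have ABsum: "\<And>w. A w + B w = (x w + y w) - sc cc w"
      unfolding A_def B_def T_def x_def y_def cc_def scale_left_distrib by (rule add_diff_add[symmetric])
    have Erel: "\<And>w. Eh (A w) + Eh (B w) = sc (- cc) (Eh w)"
    proof -
      fix w
      have "Eh (A w) + Eh (B w) = Eh (A w + B w)" by (rule lin_add[OF Ehlin, symmetric])
      also have "\<dots> = Eh (x w + y w) - sc cc (Eh w)"
        by (simp only: ABsum lin_diff[OF Ehlin] lin_scale[OF Ehlin])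
      also have "\<dots> = - sc cc (Eh w)" by (simp only: R3' diff_0)
      also have "\<dots> = sc (- cc) (Eh w)" by (rule scale_minus_left[symmetric])
      finally show "Eh (A w) + Eh (B w) = sc (- cc) (Eh w)" .
    qed
    have Ez: "\<And>w m n. (A ^^ m) w = 0 \<Longrightarrow> (B ^^ n) w = 0 \<Longrightarrow> Eh w = 0"
      by (rule E_zero[OF A B Ehlin AB Erel ccn])
    have Pv: "\<And>m. (A ^^ NA) ((B ^^ m) v) = 0 \<and> (B ^^ NB) ((B ^^ m) v) = 0"
    proof
      fix m
      have h1: "\<And>w. A ((B ^^ m) w) = (B ^^ m) (A w)" using funpow_comm[of B A m] AB by metis
      have "(A ^^ NA) ((B ^^ m) v) = (B ^^ m) ((A ^^ NA) v)" using funpow_comm[of A "B ^^ m" NA v] h1 by blast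
      then show "(A ^^ NA) ((B ^^ m) v) = 0" using NA lin_zero[OF lin_funpow[OF B]] by simp
      show "(B ^^ NB) ((B ^^ m) v) = 0"
      proof -
        have "(B ^^ NB) ((B ^^ m) v) = (B ^^ m) ((B ^^ NB) v)" by (metis funpow_add add.commute comp_apply)
        then show ?thesis using NB lin_zero[OF lin_funpow[OF B]] by simp
      qed
    qed
    have Pv': "\<And>m. (A ^^ NA) ((A ^^ m) v) = 0 \<and> (B ^^ NB) ((A ^^ m) v) = 0"
    proof
      fix m
      have h1: "\<And>w. B ((A ^^ m) w) = (A ^^ m) (B w)" using funpow_comm[of A B m] AB by metis
      have "(B ^^ NB) ((A ^^ m) v) = (A ^^ m) ((B ^^ NB) v)" using funpow_comm[of B "A ^^ m" NB v] h1 by blast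
      then show "(B ^^ NB) ((A ^^ m) v) = 0" using NB lin_zero[OF lin_funpow[OF A]] by simp
      show "(A ^^ NA) ((A ^^ m) v) = 0"
      proof -
        have "(A ^^ NA) ((A ^^ m) v) = (A ^^ m) ((A ^^ NA) v)" by (metis funpow_add add.commute comp_apply)
        then show ?thesis using NA lin_zero[OF lin_funpow[OF A]] by simp
      qed
    qed
    have X1: "\<And>w. Eh w = 0 \<Longrightarrow> (\<lambda>w. x w - sc (i (Suc k)) w) (Sh w) = Sh (B w)"
    proof -
      fix w assume e: "Eh w = 0"
      have "x (Sh w) = Sh (y w)" using R2[of w] e by simp
      moreover have "Sh (B w) = Sh (y w) - sc (i (Suc k)) (Sh w)"
        unfolding B_def T_def y_def[symmetric] by (simp add: lin_diff[OF Shlin] lin_scale[OF Shlin])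
      ultimately show "(\<lambda>w. x w - sc (i (Suc k)) w) (Sh w) = Sh (B w)" by simp
    qed
    have X2: "\<And>w. Eh w = 0 \<Longrightarrow> (\<lambda>w. y w - sc (i k) w) (Sh w) = Sh (A w)"
    proof -
      fix w assume e: "Eh w = 0"
      have "y (Sh w) = Sh (x w)" using R1[of w] e by simp
      moreover have "Sh (A w) = Sh (x w) - sc (i k) (Sh w)"
        unfolding A_def T_def x_def[symmetric] by (simp add: lin_diff[OF Shlin] lin_scale[OF Shlin])
      ultimately show "(\<lambda>w. y w - sc (i k) w) (Sh w) = Sh (A w)" by simp
    qed
    have zgood: "good z" using Sh_good u v(2) by simp
    show "z \<in> wt_space sc (r+t) \<rho> Y (sseq k a) (svec k i)"
      unfolding wt_space_def n_def[symmetric] sa_def[symmetric]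
    proof (intro CollectI conjI ballI)
      show "z \<in> range (\<rho> (one_d n sa))" by (rule good_range[OF zgood])
      fix j assume j: "j \<in> {1..n}"
      show "\<exists>N. ((\<lambda>w. Y j w - sc (svec k i j) w) ^^ N) z = 0"
      proof (cases "j = k")
        case True
        have EB: "\<And>m. Eh ((B ^^ m) v) = 0" using Ez Pv by blast
        have "((\<lambda>w. x w - sc (i (Suc k)) w) ^^ NB) (Sh v) = Sh ((B ^^ NB) v)"
          by (rule transfer_pow[where P="\<lambda>w. Eh w = 0" and X="\<lambda>w. x w - sc (i (Suc k)) w" and S=Sh and B=B and v=v, OF EB X1])
        then show ?thesis using True NB lin_zero[OF Shlin] v(2) k1
          by (intro exI[of _ NB]) (simp add: svec_def x_def)
      next
        case False
        show ?thesis
        proof (cases "j = Suc k")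
          case True
          have EA: "\<And>m. Eh ((A ^^ m) v) = 0" using Ez Pv' by blast
          have "((\<lambda>w. y w - sc (i k) w) ^^ NA) (Sh v) = Sh ((A ^^ NA) v)"
            by (rule transfer_pow[where P="\<lambda>w. Eh w = 0" and X="\<lambda>w. y w - sc (i k) w" and S=Sh and B=A and v=v, OF EA X2])
          then show ?thesis using True NA lin_zero[OF Shlin] v(2) k1
            by (intro exI[of _ NA]) (simp add: svec_def y_def)
        next
          case False': False
          obtain N where "(T j ^^ N) v = 0" using vN j by blast
          then have "(T j ^^ N) z = 0" using TSh[OF j] False False' v(2) lin_zero[OF Shlin] by simp
          then show ?thesis using False False' by (intro exI[of _ N]) (simp add: svec_def T_def)
        qed
      qed
    qed
  next
    fix z assume c: "i k + i (Suc k) = 0" and z: "z \<in> opSh r t \<rho> k ` wt_space sc (r+t) \<rho> Y a i"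
    then obtain v where v: "v \<in> wt_space sc n \<rho> Y a i" "z = Sh v" by (auto simp: Sh_def n_def)
    obtain u where u: "v = \<rho> (one_d n a) u" using v(1) by (auto simp: wt_space_def)
    have vN: "\<And>j. j \<in> {1..n} \<Longrightarrow> \<exists>N. (T j ^^ N) v = 0" using v(1) by (auto simp: wt_space_def T_def)
    define A where "A = T k"
    define B where "B = T (Suc k)"
    have A: "clin sc A" unfolding A_def by (rule Tlin[OF k1(1)])
    have B: "clin sc B" unfolding B_def by (rule Tlin[OF k1(2)])
    have AB: "\<And>w. A (B w) = B (A w)" unfolding A_def B_def T_def
      using comm_T[OF x y xy] by (simp add: x_def y_def)
    obtain NA where NA: "(A ^^ NA) v = 0" using vN k1 A_def by blast
    obtain NB where NB: "(B ^^ NB) v = 0" using vN k1 B_def by blast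
    define P where "P = (\<lambda>w. x w + y w)"
    have Plin: "clin sc P" unfolding P_def by (rule lin_plus[OF x y])
    have PAB: "\<And>w. P w = A w + B w"
    proof -
      fix w
      have "A w + B w = (x w + y w) - sc (i k + i (Suc k)) w"
        unfolding A_def B_def T_def x_def y_def scale_left_distrib by (rule add_diff_add[symmetric])
      then show "P w = A w + B w" using c by (simp add: P_def)
    qed
    have Pv0: "(P ^^ (NA + NB)) v = 0" by (rule nil_sum[OF A B Plin AB PAB NA NB])
    have PSh: "\<And>w. P (Sh w) = Sh (P w)"
    proof -
      fix w
      have "(Sh (x w) - y (Sh w)) + (Sh (y w) - x (Sh w)) = 0" unfolding R1 R2 by simp
      then have "(Sh (x w) + Sh (y w)) - (y (Sh w) + x (Sh w)) = 0" by (simp only: add_diff_add)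
      then have h: "Sh (x w) + Sh (y w) = y (Sh w) + x (Sh w)" using right_minus_eq by blast
      show "P (Sh w) = Sh (P w)" unfolding P_def lin_add[OF Shlin] h by (rule add.commute)
    qed
    have xP: "\<And>w. P (x w) = x (P w)" unfolding P_def using xy by (simp add: lin_add[OF x])
    define Q where "Q w = (good w \<and> (\<forall>j\<in>{1..n} - {k, Suc k}. \<exists>N. (T j ^^ N) w = 0) \<and> (\<exists>M. (P ^^ M) w = 0))" for w
    have Tx: "\<And>j w N. j \<in> {1..n} \<Longrightarrow> (T j ^^ N) (x w) = x ((T j ^^ N) w)"
    proof -
      fix j w N assume j: "j \<in> {1..n}"
      have "\<And>w. T j (x w) = x (T j w)" unfolding T_def
        by (rule T_comm_lin[OF Ylin[OF j] x]) (simp add: x_def Ycomm[OF j k1(1)])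
      then show "(T j ^^ N) (x w) = x ((T j ^^ N) w)" by (rule funpow_comm)
    qed
    have nil_add: "\<And>F u w. clin sc F \<Longrightarrow> \<exists>N. (F ^^ N) u = 0 \<Longrightarrow> \<exists>N. (F ^^ N) w = 0 \<Longrightarrow> \<exists>N. (F ^^ N) (u + w) = 0"
    proof -
      fix F u w assume F: "clin sc F" and "\<exists>N. (F ^^ N) u = 0" "\<exists>N. (F ^^ N) w = 0"
      then obtain N1 N2 where N: "(F ^^ N1) u = 0" "(F ^^ N2) w = 0" by blast
      have "(F ^^ (N1 + N2)) u = 0" by (rule funpow_zero_mono[OF F N(1)]) simp
      moreover have "(F ^^ (N1 + N2)) w = 0" by (rule funpow_zero_mono[OF F N(2)]) simp
      ultimately have "(F ^^ (N1 + N2)) (u + w) = 0" by (simp add: lin_add[OF lin_funpow[OF F]])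
      then show "\<exists>N. (F ^^ N) (u + w) = 0" by blast
    qed
    have nil_scale: "\<And>F c w. clin sc F \<Longrightarrow> \<exists>N. (F ^^ N) w = 0 \<Longrightarrow> \<exists>N. (F ^^ N) (sc c w) = 0"
    proof -
      fix F c w assume F: "clin sc F" and "\<exists>N. (F ^^ N) w = 0"
      then obtain N where N: "(F ^^ N) w = 0" by blast
      have "(F ^^ N) (sc c w) = sc c ((F ^^ N) w)" by (rule lin_scale[OF lin_funpow[OF F]])
      then have "(F ^^ N) (sc c w) = 0" using N by simp
      then show "\<exists>N. (F ^^ N) (sc c w) = 0" by blast
    qed
    have nil_comm: "\<And>F w. clin sc F \<Longrightarrow> (\<And>w. F (x w) = x (F w)) \<Longrightarrow> \<exists>N. (F ^^ N) w = 0 \<Longrightarrow> \<exists>N. (F ^^ N) (x w) = 0"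
    proof -
      fix F w assume F: "clin sc F" and Fx: "\<And>w. F (x w) = x (F w)" and "\<exists>N. (F ^^ N) w = 0"
      then obtain N where "(F ^^ N) w = 0" by blast
      then have "(F ^^ N) (x w) = 0" using funpow_comm[of F x N w] Fx lin_zero[OF x] by metis
      then show "\<exists>N. (F ^^ N) (x w) = 0" by blast
    qed
    have QC: "closedQ sc x Q"
      unfolding closedQ_def
    proof (intro conjI allI impI)
      have "(P ^^ 0) 0 = 0" by simp
      moreover have "\<forall>j\<in>{1..n} - {k, Suc k}. \<exists>N. (T j ^^ N) 0 = 0"
      proof
        fix j show "\<exists>N. (T j ^^ N) 0 = 0" by (rule exI[of _ 0]) simp
      qed
      ultimately show "Q 0" unfolding Q_def using good_0 by blast
      fix u w assume qu: "Q u" and qw: "Q w"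
      have "good (u + w)" using qu qw good_add by (simp add: Q_def)
      moreover have "\<exists>M. (P ^^ M) (u + w) = 0" using qu qw nil_add[OF Plin] by (simp add: Q_def)
      moreover have "\<forall>j\<in>{1..n} - {k, Suc k}. \<exists>N. (T j ^^ N) (u + w) = 0"
      proof
        fix j assume j: "j \<in> {1..n} - {k, Suc k}"
        have "\<exists>N. (T j ^^ N) u = 0" "\<exists>N. (T j ^^ N) w = 0" using qu qw j by (simp_all add: Q_def)
        then show "\<exists>N. (T j ^^ N) (u + w) = 0" using nil_add[OF Tlin] j by simp
      qed
      ultimately show "Q (u + w)" unfolding Q_def by blast
    next
      fix c w assume qw: "Q w"
      have "good (sc c w)" using qw good_scale by (simp add: Q_def)
      moreover have "\<exists>M. (P ^^ M) (sc c w) = 0" using qw nil_scale[OF Plin] by (simp add: Q_def)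
      moreover have "\<forall>j\<in>{1..n} - {k, Suc k}. \<exists>N. (T j ^^ N) (sc c w) = 0"
      proof
        fix j assume j: "j \<in> {1..n} - {k, Suc k}"
        have "\<exists>N. (T j ^^ N) w = 0" using qw j by (simp add: Q_def)
        then show "\<exists>N. (T j ^^ N) (sc c w) = 0" using nil_scale[OF Tlin] j by simp
      qed
      ultimately show "Q (sc c w)" unfolding Q_def by blast
    next
      fix w assume q: "Q w"
      have "good (x w)" using q good_Y[OF k1(1)] by (simp add: Q_def x_def)
      moreover have "\<forall>j\<in>{1..n} - {k, Suc k}. \<exists>N. (T j ^^ N) (x w) = 0"
      proof
        fix j assume j: "j \<in> {1..n} - {k, Suc k}"
        have qq: "\<forall>j\<in>{1..n} - {k, Suc k}. \<exists>N. (T j ^^ N) w = 0" using q unfolding Q_def by blast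
        obtain N where N: "(T j ^^ N) w = 0" using qq j by blast
        have "(T j ^^ N) (x w) = 0" using Tx[of j N w] j N lin_zero[OF x] by simp
        then show "\<exists>N. (T j ^^ N) (x w) = 0" by blast
      qed
      moreover have "\<exists>M. (P ^^ M) (x w) = 0"
        using q nil_comm[OF Plin xP] unfolding Q_def by blast
      ultimately show "Q (x w)" unfolding Q_def by blast
    qed
    have Qz: "Q z"
    proof -
      have "good z" using Sh_good u v(2) by simp
      moreover have "\<forall>j\<in>{1..n} - {k, Suc k}. \<exists>N. (T j ^^ N) z = 0"
      proof
        fix j assume j: "j \<in> {1..n} - {k, Suc k}"
        obtain N where "(T j ^^ N) v = 0" using vN j by blast
        then have "(T j ^^ N) z = 0" using TSh j v(2) lin_zero[OF Shlin] by simp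
        then show "\<exists>N. (T j ^^ N) z = 0" by blast
      qed
      moreover have "(P ^^ (NA + NB)) z = 0"
        using funpow_comm[of P Sh "NA + NB" v] PSh Pv0 v(2) lin_zero[OF Shlin] by simp
      ultimately show ?thesis unfolding Q_def by blast
    qed
    obtain F f where F: "finite F" "\<forall>l\<in>F. Q (f l) \<and> (\<exists>N. ((\<lambda>w. x w - sc l w) ^^ N) (f l) = 0)" "z = (\<Sum>l\<in>F. f l)"
      using decomp_full[OF assms(1) x QC Qz] by blast
    define ii where "ii l = i(k := l, Suc k := - l)" for l
    have iik: "\<And>l. ii l k = l" "\<And>l. ii l (Suc k) = - l" "\<And>l j. j \<noteq> k \<Longrightarrow> j \<noteq> Suc k \<Longrightarrow> ii l j = i j"
      using k1(3) by (auto simp: ii_def)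
    have inj: "inj_on ii F" by (rule inj_onI) (metis iik(1))
    have wt: "\<And>l. l \<in> F \<Longrightarrow> f l \<in> wt_space sc (r+t) \<rho> Y (sseq k a) (ii l)"
    proof -
      fix l assume l: "l \<in> F"
      have Ql: "Q (f l)" and Nl: "\<exists>N. ((\<lambda>w. x w - sc l w) ^^ N) (f l) = 0" using F(2) l by auto
      show "f l \<in> wt_space sc (r+t) \<rho> Y (sseq k a) (ii l)"
        unfolding wt_space_def n_def[symmetric] sa_def[symmetric]
      proof (intro CollectI conjI ballI)
        show "f l \<in> range (\<rho> (one_d n sa))" using good_range Ql by (simp add: Q_def)
        fix j assume j: "j \<in> {1..n}"
        show "\<exists>N. ((\<lambda>w. Y j w - sc (ii l j) w) ^^ N) (f l) = 0"
        proof (cases "j = k")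
          case True then show ?thesis using Nl iik(1) by (simp add: x_def)
        next
          case False
          show ?thesis
          proof (cases "j = Suc k")
            case True
            define R where "R = (\<lambda>w. sc l w - x w)"
            define D where "D = (\<lambda>w. y w - sc (- l) w)"
            have Rlin: "clin sc R" unfolding R_def by (rule lin_minus[OF lin_scalemap[OF vs] x])
            have Rneg: "R = (\<lambda>z. - (x z - sc l z))" unfolding R_def by (rule ext) simp
            have Dlin: "clin sc D" unfolding D_def by (rule lin_sub_scale[OF y])
            have PR: "\<And>w. P (R w) = R (P w)"
            proof -
              fix w
              have 1: "P (R w) = (sc l (x w) - x (x w)) + (sc l (y w) - y (x w))" unfolding P_def R_def
                by (simp only: lin_diff[OF x] lin_diff[OF y] lin_scale[OF x] lin_scale[OF y])
              have 2: "R (P w) = (sc l (x w) + sc l (y w)) - (x (x w) + y (x w))" unfolding P_def R_def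
                by (simp only: lin_add[OF x] scale_right_distrib xy)
              show "P (R w) = R (P w)" unfolding 1 2 by (rule add_diff_add[symmetric])
            qed
            have DPR: "\<And>w. D w = P w + R w" unfolding D_def P_def R_def
              by (simp add: scale_minus_left)
            obtain M where M: "(P ^^ M) (f l) = 0" using Ql by (auto simp: Q_def)
            obtain N where N: "((\<lambda>w. x w - sc l w) ^^ N) (f l) = 0" using Nl by blast
            have "(R ^^ N) (f l) = 0" unfolding Rneg using funpow_neg[OF lin_sub_scale[OF x, of l], where n=N and w="f l"] N by simp
            then have "(D ^^ (M + N)) (f l) = 0" by (rule nil_sum[OF Plin Rlin Dlin PR DPR M])
            then show ?thesis using True iik(2) by (intro exI[of _ "M + N"]) (simp add: D_def y_def)
          next
            case False': False
            have "j \<in> {1..n} - {k, Suc k}" using j False False' by simp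
            moreover have "\<forall>j\<in>{1..n} - {k, Suc k}. \<exists>N. (T j ^^ N) (f l) = 0" using Ql unfolding Q_def by blast
            ultimately obtain N where "(T j ^^ N) (f l) = 0" by blast
            then show ?thesis using iik(3)[OF False False'] by (intro exI[of _ N]) (simp add: T_def)
          qed
        qed
      qed
    qed
    show "z \<in> sum_spaces I (wt_space sc (r+t) \<rho> Y (sseq k a))"
      unfolding sum_spaces_def
    proof (intro CollectI exI conjI)
      show "finite (ii ` F)" using F(1) by simp
      show "ii ` F \<subseteq> I" unfolding I_def using iik by auto
      show "\<forall>c\<in>ii ` F. f (c k) \<in> wt_space sc (r+t) \<rho> Y (sseq k a) c" using wt iik(1) by auto
      show "z = (\<Sum>c\<in>ii ` F. f (c k))" using F(3) by (simp add: sum.reindex[OF inj] iik(1))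
    qed
  qed
qed

end
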